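(* Let $G$ be a simple graph with edge set $E$ and $t$ triangles, let $\epsilon\in(0,1)$ and $\widetilde{t}>0$. Let $P=(E_0,E_1)$ be any partition of $E$, and assign each triangle to its first edge (according to a fixed arbitrary predefined order on edges) that lies in $E_0$, if such exists; otherwise (all three edges in $E_1$) the triangle is not assigned. For an edge $e$ let $a_P(e)$ be the number of triangles assigned to $e$. Then $\sum_{e\in E}a_P(e)\le t$. Furthermore, if $|E_1|\le 3(\epsilon\widetilde{t})^{2/3}$ and $\widetilde{t}\in[t/4,t]$, then $\sum_{e\in E_0}a_P(e)\ge(1-12\epsilon)t$. *)

theory Defs
  imports Complex_Main
begin

definition simple_graph_edges :: "'a set set \<Rightarrow> bool" where
  "simple_graph_edges E \<longleftrightarrow> finite E \<and> (\<forall>e\<in>E. card e = 2)"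

definition triangles :: "'a set set \<Rightarrow> 'a set set" where
  "triangles E = {T. card T = 3 \<and> (\<forall>x\<in>T. \<forall>y\<in>T. x \<noteq> y \<longrightarrow> {x, y} \<in> E)}"

text \<open>The fixed order on edges is given by a ranking rank, injective on E.
  Triangle T is assigned to edge e iff e is the first edge of T (w.r.t. rank) lying in E0.\<close>
definition assigned_to :: "'a set set \<Rightarrow> ('a set \<Rightarrow> nat) \<Rightarrow> 'a set \<Rightarrow> 'a set \<Rightarrow> bool" where
  "assigned_to E0 rank T e \<longleftrightarrow>
     e \<in> E0 \<and> e \<subseteq> T \<and> (\<forall>e'\<in>E0. e' \<subseteq> T \<longrightarrow> rank e \<le> rank e')"

definition aP :: "'a set set \<Rightarrow> 'a set set \<Rightarrow> ('a set \<Rightarrow> nat) \<Rightarrow> 'a set \<Rightarrow> nat" where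
  "aP E E0 rank e = card {T \<in> triangles E. assigned_to E0 rank T e}"

end

theory Submission
  imports Defs
begin

lemma tri_mem_union:
  assumes "T \<in> triangles E" "x \<in> T" shows "x \<in> \<Union>E"
proof -
  have c: "card T = 3" using assms(1) by (simp add: triangles_def)
  then have "card (T - {x}) = 2" using assms(2) by (simp add: card_Diff_singleton)
  then have "T - {x} \<noteq> {}" by (intro notI) simp
  then obtain y where "y \<in> T - {x}" by blast
  then have "{x, y} \<in> E" using assms by (auto simp: triangles_def)
  then show ?thesis by blast
qed

lemma V_finite: assumes "simple_graph_edges E" shows "finite (\<Union>E)"
proof (rule finite_Union)
  show "finite E" using assms by (simp add: simple_graph_edges_def)
  fix e assume "e \<in> E"
  then have "card e = 2" using assms by (simp add: simple_graph_edges_def)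
  then show "finite e" by (intro card_ge_0_finite) simp
qed

lemma tri_finite: assumes "simple_graph_edges E" shows "finite (triangles E)"
proof -
  have "triangles E \<subseteq> Pow (\<Union>E)"
  proof
    fix T assume "T \<in> triangles E"
    then have "\<forall>x\<in>T. x \<in> \<Union>E" using tri_mem_union by metis
    then show "T \<in> Pow (\<Union>E)" by (simp add: subset_eq)
  qed
  moreover have "finite (Pow (\<Union>E))" using V_finite[OF assms] by simp
  ultimately show ?thesis by (rule finite_subset)
qed

lemma tri_edge:
  assumes "T \<in> triangles E" "x \<in> T" "y \<in> T" "x \<noteq> y" shows "{x, y} \<in> E"
  using assms by (simp add: triangles_def)

lemma tri_bound:
  assumes G: "simple_graph_edges E"
  shows "3 * real (card (triangles E)) \<le> 2 * real (card E) * sqrt (real (card E))"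
proof -
  define V where "V = \<Union>E"
  define m where "m = card E"
  define D where "D v = {f\<in>E. v\<in>f}" for v
  define C where "C v = {e\<in>E. v\<notin>e \<and> insert v e \<in> triangles E}" for v
  define Tv where "Tv v = {T\<in>triangles E. v\<in>T}" for v
  have finE: "finite E" and c2: "\<And>e. e \<in> E \<Longrightarrow> card e = 2"
    using G by (auto simp: simple_graph_edges_def)
  have finV: "finite V" using V_finite[OF G] by (simp add: V_def)
  have fintri: "finite (triangles E)" using tri_finite[OF G] .
  have a: "card (Tv v) \<le> card (C v)" for v
  proof (rule card_inj_on_le[where f="\<lambda>T. T - {v}"])
    show "inj_on (\<lambda>T. T - {v}) (Tv v)" unfolding inj_on_def Tv_def by blast
    show "finite (C v)" using finE by (simp add: C_def)
    show "(\<lambda>T. T - {v}) ` Tv v \<subseteq> C v"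
    proof
      fix e assume "e \<in> (\<lambda>T. T - {v}) ` Tv v"
      then obtain T where T: "T \<in> triangles E" "v \<in> T" "e = T - {v}" by (auto simp: Tv_def)
      have "card T = 3" using T by (simp add: triangles_def)
      then have "card e = 2" using T by (simp add: card_Diff_singleton)
      then obtain a b where ab: "e = {a,b}" "a \<noteq> b" by (metis card_2_iff)
      then have "a \<in> T" "b \<in> T" using T by auto
      then have "{a,b} \<in> E" using tri_edge[OF T(1)] ab(2) by simp
      moreover have "insert v e = T" using T by blast
      ultimately show "e \<in> C v" using T ab by (auto simp: C_def)
    qed
  qed
  have b: "card (C v) \<le> card (D v) * card (D v)" for v
  proof -
    have "C v \<subseteq> (\<lambda>(f,g). (f \<union> g) - {v}) ` (D v \<times> D v)"
    proof
      fix e assume e: "e \<in> C v"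
      then have "card e = 2" using c2 by (auto simp: C_def)
      then obtain a b where ab: "e = {a,b}" "a \<noteq> b" by (metis card_2_iff)
      have va: "v \<noteq> a" "v \<noteq> b" using e ab by (auto simp: C_def)
      have tr: "insert v e \<in> triangles E" using e by (auto simp: C_def)
      have "v \<in> insert v e" "a \<in> insert v e" "b \<in> insert v e" using ab by auto
      then have "{v,a} \<in> E" "{v,b} \<in> E" using tri_edge[OF tr] va by simp_all
      then have "({v,a},{v,b}) \<in> D v \<times> D v" by (auto simp: D_def)
      moreover have "e = ({v,a} \<union> {v,b}) - {v}" using ab va by auto
      ultimately show "e \<in> (\<lambda>(f,g). (f \<union> g) - {v}) ` (D v \<times> D v)"
        by (intro rev_image_eqI[of "({v,a},{v,b})"]) auto
    qed
    moreover have "finite (D v)" using finE by (simp add: D_def)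
    ultimately have "card (C v) \<le> card ((\<lambda>(f,g). (f \<union> g) - {v}) ` (D v \<times> D v))"
      by (intro card_mono) auto
    also have "\<dots> \<le> card (D v \<times> D v)" by (rule card_image_le) (use \<open>finite (D v)\<close> in simp)
    finally have "card (C v) \<le> card (D v \<times> D v)" .
    then show ?thesis by (simp add: card_cartesian_product)
  qed
  have c: "card (C v) \<le> m" for v
    unfolding m_def C_def by (rule card_mono[OF finE]) auto
  have d: "real (card (C v)) \<le> sqrt m * real (card (D v))" for v
  proof (cases "real (card (D v)) ^ 2 \<le> m")
    case True
    then have "real (card (D v)) \<le> sqrt m" by (simp add: real_le_rsqrt)
    then have "real (card (D v)) * real (card (D v)) \<le> sqrt m * real (card (D v))"
      by (simp add: mult_right_mono)
    moreover have "real (card (C v)) \<le> real (card (D v)) * real (card (D v))"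
      using b[of v] by (metis of_nat_le_iff of_nat_mult)
    ultimately show ?thesis by linarith
  next
    case False
    then have "sqrt m \<le> real (card (D v))"
      proof -
      have "real m < real (card (D v)) ^ 2" using False by linarith
      then have "sqrt m < sqrt (real (card (D v)) ^ 2)" by (rule real_sqrt_less_mono)
      then show ?thesis by simp
    qed
    then have "sqrt m * sqrt m \<le> sqrt m * real (card (D v))"
      by (intro mult_left_mono) auto
    moreover have "sqrt m * sqrt m = m" by simp
    moreover have "real (card (C v)) \<le> m" using c[of v] by simp
    ultimately show ?thesis by linarith
  qed
  have e: "(\<Sum>v\<in>V. card (D v)) = 2 * m"
  proof -
    have "(\<Sum>v\<in>V. card {f\<in>E. v \<in> f}) = 2 * card E"
    proof (rule sum_multicount[OF finV finE])
      show "\<forall>f\<in>E. card {v\<in>V. v \<in> f} = 2"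
      proof
        fix f assume "f \<in> E"
        then have "{v\<in>V. v \<in> f} = f" by (auto simp: V_def)
        then show "card {v\<in>V. v \<in> f} = 2" using c2 \<open>f \<in> E\<close> by simp
      qed
    qed
    then show ?thesis by (simp add: D_def m_def)
  qed
  have f: "(\<Sum>v\<in>V. card (Tv v)) = 3 * card (triangles E)"
  proof -
    have "(\<Sum>v\<in>V. card {T\<in>triangles E. v \<in> T}) = 3 * card (triangles E)"
    proof (rule sum_multicount[OF finV fintri])
      show "\<forall>T\<in>triangles E. card {v\<in>V. v \<in> T} = 3"
      proof
        fix T assume T: "T \<in> triangles E"
        then have "{v\<in>V. v \<in> T} = T" using tri_mem_union[OF T] by (auto simp: V_def)
        then show "card {v\<in>V. v \<in> T} = 3" using T by (simp add: triangles_def)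
      qed
    qed
    then show ?thesis by (simp add: Tv_def)
  qed
  have "3 * real (card (triangles E)) = (\<Sum>v\<in>V. real (card (Tv v)))"
    using f by (metis of_nat_sum of_nat_mult of_nat_numeral)
  also have "\<dots> \<le> (\<Sum>v\<in>V. sqrt m * real (card (D v)))"
  proof (rule sum_mono)
    fix v assume "v \<in> V"
    have "real (card (Tv v)) \<le> real (card (C v))" using a[of v] by simp
    then show "real (card (Tv v)) \<le> sqrt m * real (card (D v))" using d[of v] by linarith
  qed
  also have "\<dots> = sqrt m * real (\<Sum>v\<in>V. card (D v))"
    by (simp add: sum_distrib_left)
  also have "\<dots> = 2 * real m * sqrt m" using e by simp
  finally show ?thesis by (simp add: m_def)
qed


lemma num_bound:
  fixes m1 c1 e tt t :: real
  assumes "3 * c1 \<le> 2 * m1 * sqrt m1" "0 \<le> m1" "m1 \<le> 3 * (e * tt) powr (2/3)"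
    "0 < e" "0 < tt" "tt \<le> t"
  shows "c1 \<le> 12 * e * t"
proof -
  define x where "x = e * tt"
  have x0: "0 < x" using assms by (simp add: x_def)
  define y where "y = x powr (2/3)"
  have y0: "0 \<le> y" by (simp add: y_def)
  have "sqrt m1 \<le> sqrt (3 * y)" using assms(3) by (simp add: y_def x_def)
  then have "m1 * sqrt m1 \<le> (3 * y) * sqrt (3 * y)"
    using assms(2,3) y0 by (simp add: mult_mono x_def y_def)
  also have "\<dots> = 3 * sqrt 3 * (y * sqrt y)" by (simp add: real_sqrt_mult)
  also have "y * sqrt y = x"
  proof -
    have "sqrt y = y powr (1/2)" using y0 by (simp add: powr_half_sqrt)
    then have "y * sqrt y = y powr 1 * y powr (1/2)" using y0 by (cases "y = 0") auto
    also have "\<dots> = y powr (1 + 1/2)" by (rule powr_add[symmetric])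
    also have "\<dots> = y powr (3/2)" by simp
    also have "\<dots> = x" using x0 by (simp add: y_def powr_powr)
    finally show ?thesis .
  qed
  finally have h: "m1 * sqrt m1 \<le> 3 * sqrt 3 * x" .
  have s3: "sqrt 3 \<le> 7/4" by (rule real_le_lsqrt) (auto simp: power2_eq_square)
  have "x \<le> e * t" using assms by (simp add: x_def)
  then have "3 * sqrt 3 * x \<le> 3 * (7/4) * (e * t)" using s3 x0
    by (intro mult_mono) auto
  then show ?thesis using h assms(1) x0 \<open>x \<le> e * t\<close> by linarith
qed

theorem claim3p5:
  fixes E E0 E1 :: "'a set set" and rank :: "'a set \<Rightarrow> nat"
    and \<epsilon> tt :: real and t :: nat
  assumes G: "simple_graph_edges E"
    and t_def: "t = card (triangles E)"
    and eps: "0 < \<epsilon>" "\<epsilon> < 1"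
    and tt_pos: "tt > 0"
    and part: "E0 \<union> E1 = E" "E0 \<inter> E1 = {}"
    and rank: "inj_on rank E"
  shows "(\<Sum>e\<in>E. aP E E0 rank e) \<le> t \<and>
         ((real (card E1) \<le> 3 * (\<epsilon> * tt) powr (2/3) \<and> real t / 4 \<le> tt \<and> tt \<le> real t)
           \<longrightarrow> (\<Sum>e\<in>E0. real (aP E E0 rank e)) \<ge> (1 - 12 * \<epsilon>) * real t)"
proof -
  define A where "A e = {T \<in> triangles E. assigned_to E0 rank T e}" for e
  have finE: "finite E" and c2: "\<And>e. e \<in> E \<Longrightarrow> card e = 2"
    using G by (auto simp: simple_graph_edges_def)
  have fintri: "finite (triangles E)" using tri_finite[OF G] .
  have E0E: "E0 \<subseteq> E" using part by blast
  have finE0: "finite E0" using finE E0E finite_subset by blast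
  have s1: "(\<Sum>e\<in>E. aP E E0 rank e) = (\<Sum>e\<in>E0. aP E E0 rank e)"
    by (rule sum.mono_neutral_right[OF finE E0E])
       (auto simp: aP_def assigned_to_def)
  have s2: "(\<Sum>e\<in>E0. aP E E0 rank e) = card (\<Union>e\<in>E0. A e)"
  proof -
    have "card (\<Union>e\<in>E0. A e) = (\<Sum>e\<in>E0. card (A e))"
    proof (rule card_UN_disjoint[OF finE0])
      show "\<forall>i\<in>E0. finite (A i)" using fintri by (simp add: A_def)
      show "\<forall>i\<in>E0. \<forall>j\<in>E0. i \<noteq> j \<longrightarrow> A i \<inter> A j = {}"
      proof (intro ballI impI)
        fix i j assume ij: "i \<in> E0" "j \<in> E0" "i \<noteq> j"
        show "A i \<inter> A j = {}"
        proof (rule ccontr)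
          assume "A i \<inter> A j \<noteq> {}"
          then obtain T where "assigned_to E0 rank T i" "assigned_to E0 rank T j"
            by (auto simp: A_def)
          then have "rank i = rank j" using ij by (auto simp: assigned_to_def intro: antisym)
          then show False using ij rank E0E by (meson inj_onD subsetD)
        qed
      qed
    qed
    then show ?thesis by (simp add: aP_def A_def)
  qed
  have sub: "(\<Union>e\<in>E0. A e) \<subseteq> triangles E" by (auto simp: A_def)
  have part1: "(\<Sum>e\<in>E. aP E E0 rank e) \<le> t"
    using s1 s2 card_mono[OF fintri sub] t_def by simp
  have cover: "triangles E - triangles E1 \<subseteq> (\<Union>e\<in>E0. A e)"
  proof
    fix T assume T: "T \<in> triangles E - triangles E1"
    then obtain x y where xy: "x \<in> T" "y \<in> T" "x \<noteq> y" "{x,y} \<notin> E1"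
      by (auto simp: triangles_def)
    then have "{x,y} \<in> E" using T by (auto simp: triangles_def)
    then have "{x,y} \<in> E0" using xy part by blast
    define S where "S = {e\<in>E0. e \<subseteq> T}"
    have Sne: "S \<noteq> {}" using xy \<open>{x,y} \<in> E0\<close> by (auto simp: S_def)
    have finS: "finite S" using finE0 by (simp add: S_def)
    have "Min (rank ` S) \<in> rank ` S" using Sne finS by simp
    then obtain e where e: "e \<in> S" "rank e = Min (rank ` S)" by auto
    have "\<forall>e'\<in>E0. e' \<subseteq> T \<longrightarrow> rank e \<le> rank e'"
      using e finS by (auto simp: S_def)
    then have "assigned_to E0 rank T e" using e by (auto simp: assigned_to_def S_def)
    then show "T \<in> (\<Union>e\<in>E0. A e)" using T e by (auto simp: A_def S_def)
  qed
  have G1: "simple_graph_edges E1"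
    using G part finite_subset by (auto simp: simple_graph_edges_def)
  have fintri1: "finite (triangles E1)" using tri_finite[OF G1] .
  have "t \<le> card (triangles E - triangles E1) + card (triangles E1)"
  proof -
    have "triangles E \<subseteq> (triangles E - triangles E1) \<union> triangles E1" by blast
    then have "card (triangles E) \<le> card ((triangles E - triangles E1) \<union> triangles E1)"
      using fintri fintri1 by (intro card_mono) auto
    also have "\<dots> \<le> card (triangles E - triangles E1) + card (triangles E1)" by (rule card_Un_le)
    finally show ?thesis using t_def by simp
  qed
  also have "card (triangles E - triangles E1) \<le> card (\<Union>e\<in>E0. A e)"
    by (rule card_mono[OF _ cover]) (use fintri sub finite_subset in blast)
  finally have key: "t \<le> card (\<Union>e\<in>E0. A e) + card (triangles E1)" by simp
  have part2: "(\<Sum>e\<in>E0. real (aP E E0 rank e)) \<ge> (1 - 12 * \<epsilon>) * real t"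
    if h: "real (card E1) \<le> 3 * (\<epsilon> * tt) powr (2/3)" "real t / 4 \<le> tt" "tt \<le> real t"
  proof -
    have "real (card (triangles E1)) \<le> 12 * \<epsilon> * real t"
      by (rule num_bound[OF tri_bound[OF G1] _ h(1) eps(1) tt_pos h(3)]) simp
    moreover have "(\<Sum>e\<in>E0. real (aP E E0 rank e)) = real (card (\<Union>e\<in>E0. A e))"
      using s2 by (metis of_nat_sum)
    moreover have "real t \<le> real (card (\<Union>e\<in>E0. A e)) + real (card (triangles E1))"
      using key by linarith
    ultimately show ?thesis by (simp add: algebra_simps)
  qed
  show ?thesis using part1 part2 by blast
qed

end
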